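(* Let $d\ge 2$ and let $\nu=(\nu_1,\dots,\nu_d)$ be probability distributions on $\mathbb{Z}_+^d$ forming the progeny distribution of a $d$-type branching process $\mathbf Z$ which is irreducible, non-degenerated, and critical or subcritical. For $i\in[d]$ let $O_i$ be the total number of individuals of type $i$ born up to the extinction time $T$, and for $i\neq j$ let $A_{ij}$ be the total number of individuals of type $j$ whose parent is of type $i$, up to time $T$. Then for all integers $r_i,n_i,k_{ij}$, $i,j\in[d]$, such that $r_i\ge 0$, $r_1+\dots+r_d\ge 1$, $k_{ij}\ge 0$ for $i\ne j$, $-k_{jj}=r_j+\sum_{i\ne j}k_{ij}$ for all $j$, and $n_i\ge -k_{ii}$ for all $i$, we have $$\mathbb{P}_{\mathrm r}\Big(O_1=n_1,\dots,O_d=n_d,\ A_{ij}=k_{ij},\ i,j\in[d],\ i\neq j\Big)=\frac{\det(K)}{\bar n_1\bar n_2\cdots\bar n_d}\prod_{i=1}^d\nu_i^{*n_i}\big(k_{i1},\dots,k_{i(i-1)},n_i+k_{ii},k_{i(i+1)},\dots,k_{id}\big),$$ where $\mathrm r=(r_1,\dots,r_d)$, $\nu_i^{*0}=\delta_0$, $\bar n_i=n_i\vee 1$, and $K$ is the matrix $(-k_{ij})_{i,j\in[d]}$ from which the line $i$ and the column $i$ have been removed for every $i$ such that $n_i=0$.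
   Context: $[d]=\{1,\dots,d\}$, $\mathbb{Z}_+=\{0,1,2,\dots\}$. A $d$-type branching process with progeny distribution $\nu=(\nu_1,\dots,\nu_d)$ is the $\mathbb{Z}_+^d$-valued Markov chain $\mathbf Z_n=(Z^{(1)}_n,\dots,Z^{(d)}_n)$ with transition probabilities $P(\mathbf Z_{n+1}=\mathrm k\mid \mathbf Z_n=(r_1,\dots,r_d))=\nu_1^{*r_1}*\dots*\nu_d^{*r_d}(\mathrm k)$, where $\nu^{*r}$ is the $r$-fold convolution power ($\nu^{*0}=\delta_0$); $Z^{(i)}_n$ is the number of individuals of type $i$ in generation $n$, each individual of type $i$ independently having a random vector of children (numbers of children of each type) with law $\nu_i$. The process is realized as the genealogical forest of these individuals, so that the type of each individual's parent is defined. $\mathbb{P}_{\mathrm r}$ denotes the law when $\mathbf Z_0=\mathrm r$. The mean matrix is $M=(m_{ij})$ with $m_{ij}=\sum_{\mathbf z\in\mathbb{Z}_+^d} z_j\nu_i(\mathbf z)$; irreducible means $M$ is irreducible, and then its Perron–Frobenius eigenvalue $\rho$ satisfies $\rho\le 1$ (critical: $\rho=1$, subcritical: $\rho<1$). Non-degenerated means it is not the case that every individual has exactly one child almost surely. Under these assumptions the extinction time $T=\inf\{n:\mathbf Z_n=0\}$ is a.s. finite, and $O_i=\sum_{n\ge 0}Z^{(i)}_n$. *)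

theory Defs
  imports "HOL-Analysis.Analysis" "HOL-Probability.Probability"
begin

text \<open>Types are indexed by a finite type 'd (so d = CARD('d)); a vector in Z_+^d is a
  function 'd => nat.\<close>

definition conv_pmf :: "('d \<Rightarrow> nat) pmf \<Rightarrow> ('d \<Rightarrow> nat) pmf \<Rightarrow> ('d \<Rightarrow> nat) pmf" where
  "conv_pmf p q = bind_pmf p (\<lambda>x. bind_pmf q (\<lambda>y. return_pmf (\<lambda>j. x j + y j)))"

fun conv_pow :: "('d \<Rightarrow> nat) pmf \<Rightarrow> nat \<Rightarrow> ('d \<Rightarrow> nat) pmf" where
  "conv_pow p 0 = return_pmf (\<lambda>_. 0)"
| "conv_pow p (Suc m) = conv_pmf p (conv_pow p m)"

definition mean_matrix :: "('d \<Rightarrow> ('d \<Rightarrow> nat) pmf) \<Rightarrow> 'd \<Rightarrow> 'd \<Rightarrow> real" where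
  "mean_matrix \<nu> i j = measure_pmf.expectation (\<nu> i) (\<lambda>z. real (z j))"

fun mat_pow :: "('d::finite \<Rightarrow> 'd \<Rightarrow> real) \<Rightarrow> nat \<Rightarrow> 'd \<Rightarrow> 'd \<Rightarrow> real" where
  "mat_pow M 0 = (\<lambda>i j. if i = j then 1 else 0)"
| "mat_pow M (Suc m) = (\<lambda>i j. \<Sum>l\<in>UNIV. mat_pow M m i l * M l j)"

definition irreducible_mat :: "('d::finite \<Rightarrow> 'd \<Rightarrow> real) \<Rightarrow> bool" where
  "irreducible_mat M \<longleftrightarrow> (\<forall>i j. \<exists>n>0. mat_pow M n i j > 0)"

text \<open>Spectral radius (= Perron-Frobenius eigenvalue for irreducible nonnegative M)
  is at most c: every complex eigenvalue has modulus at most c.\<close>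
definition spectral_radius_le :: "('d::finite \<Rightarrow> 'd \<Rightarrow> real) \<Rightarrow> real \<Rightarrow> bool" where
  "spectral_radius_le M c \<longleftrightarrow>
     (\<forall>(lam::complex) (v::'d \<Rightarrow> complex). v \<noteq> (\<lambda>_. 0) \<and>
        (\<forall>i. (\<Sum>j\<in>UNIV. complex_of_real (M i j) * v j) = lam * v i) \<longrightarrow> cmod lam \<le> c)"

definition degenerate :: "('d::finite \<Rightarrow> ('d \<Rightarrow> nat) pmf) \<Rightarrow> bool" where
  "degenerate \<nu> \<longleftrightarrow> (\<forall>i. \<forall>z\<in>set_pmf (\<nu> i). (\<Sum>j\<in>UNIV. z j) = 1)"

text \<open>State (Z, A): Z = current generation,
  A i j = cumulative number (so far) of type-j individuals born to type-i parents.
  Given Z, the matrix C of children (C i j = type-j children of type-i parents in the next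
  generation) has independent rows, row i distributed as nu_i^{*Z_i}.\<close>
definition bp_step :: "('d::finite \<Rightarrow> ('d \<Rightarrow> nat) pmf) \<Rightarrow> ('d \<Rightarrow> nat) \<times> ('d \<Rightarrow> 'd \<Rightarrow> nat)
     \<Rightarrow> (('d \<Rightarrow> nat) \<times> ('d \<Rightarrow> 'd \<Rightarrow> nat)) pmf" where
  "bp_step \<nu> s = map_pmf (\<lambda>C. (\<lambda>j. \<Sum>i\<in>UNIV. C i j, \<lambda>i j. snd s i j + C i j))
      (Pi_pmf UNIV (\<lambda>_. 0) (\<lambda>i. conv_pow (\<nu> i) (fst s i)))"

fun bp_state :: "('d::finite \<Rightarrow> ('d \<Rightarrow> nat) pmf) \<Rightarrow> ('d \<Rightarrow> nat) \<Rightarrow> nat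
     \<Rightarrow> (('d \<Rightarrow> nat) \<times> ('d \<Rightarrow> 'd \<Rightarrow> nat)) pmf" where
  "bp_state \<nu> r 0 = return_pmf (r, \<lambda>_ _. 0)"
| "bp_state \<nu> r (Suc N) = bind_pmf (bp_state \<nu> r N) (bp_step \<nu>)"

text \<open>P_r(O_i = n_i for all i, A_ij = k_ij for all i ~= j).  Since the totals are finite on
  this event, the process is extinct on it, so it is the increasing union over N of the
  events {Z_N = 0, totals after N generations equal the targets}.  Here
  O_j = r_j + sum_i A_ij (all type-j individuals, including generation 0).\<close>
definition prob_OA :: "('d::finite \<Rightarrow> ('d \<Rightarrow> nat) pmf) \<Rightarrow> ('d \<Rightarrow> nat)
     \<Rightarrow> ('d \<Rightarrow> int) \<Rightarrow> ('d \<Rightarrow> 'd \<Rightarrow> int) \<Rightarrow> real" where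
  "prob_OA \<nu> r n k = (SUP N. measure_pmf.prob (bp_state \<nu> r N)
      {(Z, A). Z = (\<lambda>_. 0) \<and> (\<forall>j. int (r j + (\<Sum>i\<in>UNIV. A i j)) = n j)
               \<and> (\<forall>i j. i \<noteq> j \<longrightarrow> int (A i j) = k i j)})"

definition det_on :: "'d set \<Rightarrow> ('d \<Rightarrow> 'd \<Rightarrow> real) \<Rightarrow> real" where
  "det_on S M = (\<Sum>p\<in>{p. p permutes S}. of_int (sign p) * (\<Prod>i\<in>S. M i (p i)))"

end

theory Submission
  imports Defs "HOL-Library.Function_Algebras"
begin

lemma finite_atMost_fun:
  fixes a :: "'d::finite \<Rightarrow> 'b::order"
  assumes "\<And>x. finite {..a x}"
  shows "finite {..a}"
proof -
  have "{..a} \<subseteq> PiE UNIV (\<lambda>x. {..a x})" by (auto simp: le_fun_def)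
  moreover have "finite (PiE UNIV (\<lambda>x. {..a x}))" by (intro finite_PiE) (auto simp: assms)
  ultimately show ?thesis by (metis finite_subset)
qed

lemma finite_box[simp]: "finite {..(a::'d::finite \<Rightarrow> nat)}"
  by (rule finite_atMost_fun) simp

lemma finite_box2[simp]: "finite {..(a::'d::finite \<Rightarrow> 'e::finite \<Rightarrow> nat)}"
  by (rule finite_atMost_fun) simp

lemma fdiff_cancel: "c \<le> a \<Longrightarrow> a - (a - c) = (c::'d\<Rightarrow>nat)"
  by (auto simp: le_fun_def fun_eq_iff)
lemma fdiff_le: "a - c \<le> (a::'d\<Rightarrow>nat)"
  by (auto simp: le_fun_def)
lemma fdiff_diff: "b \<le> c \<Longrightarrow> a - b - (c - b) = a - (c::'d\<Rightarrow>nat)"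
  by (auto simp: le_fun_def fun_eq_iff)
lemma fdiff_mono: "c \<le> a \<Longrightarrow> c - b \<le> a - (b::'d\<Rightarrow>nat)"
  by (auto simp: le_fun_def intro: diff_le_mono)
lemma fadd_diff: "b + e - b = (e::'d\<Rightarrow>nat)"
  by (auto simp: fun_eq_iff)
lemma fdiff_add: "b \<le> c \<Longrightarrow> b + (c - b) = (c::'d\<Rightarrow>nat)"
  by (auto simp: le_fun_def fun_eq_iff)
lemma fle_add: "b \<le> b + (e::'d\<Rightarrow>nat)"
  by (auto simp: le_fun_def)
lemma fadd_le: "e \<le> a - b \<Longrightarrow> b \<le> a \<Longrightarrow> b + e \<le> (a::'d\<Rightarrow>nat)"
  by (auto simp: le_fun_def) (metis le_diff_conv2 add.commute)

definition fconv :: "(('d::finite \<Rightarrow> nat) \<Rightarrow> real) \<Rightarrow> (('d \<Rightarrow> nat) \<Rightarrow> real) \<Rightarrow> ('d \<Rightarrow> nat) \<Rightarrow> real" where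
  "fconv f g a = (\<Sum>c\<in>{..a}. f c * g (a - c))"

lemma fconv_comm: "fconv f g = fconv g f"
proof
  fix a :: "'a \<Rightarrow> nat"
  show "fconv f g a = fconv g f a"
    unfolding fconv_def
    by (rule sum.reindex_bij_witness[where i="\<lambda>c. a - c" and j="\<lambda>c. a - c"])
       (auto simp: fdiff_cancel fdiff_le)
qed

lemma fconv_assoc: "fconv (fconv f g) h = fconv f (fconv g h)"
proof
  fix a :: "'a \<Rightarrow> nat"
  have "fconv (fconv f g) h a = (\<Sum>c\<in>{..a}. \<Sum>b\<in>{b\<in>{..a}. b \<le> c}. f b * g (c - b) * h (a - c))"
    unfolding fconv_def sum_distrib_right
    by (intro sum.cong refl) (auto intro: order_trans)
  also have "\<dots> = (\<Sum>b\<in>{..a}. \<Sum>c\<in>{c\<in>{..a}. b \<le> c}. f b * g (c - b) * h (a - c))"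
    by (rule sum.swap_restrict) auto
  also have "\<dots> = (\<Sum>b\<in>{..a}. \<Sum>e\<in>{..a-b}. f b * g e * h (a - b - e))"
  proof (rule sum.cong[OF refl])
    fix b assume b: "b \<in> {..a}"
    show "(\<Sum>c\<in>{c\<in>{..a}. b \<le> c}. f b * g (c - b) * h (a - c)) = (\<Sum>e\<in>{..a-b}. f b * g e * h (a - b - e))"
      by (rule sum.reindex_bij_witness[where i="\<lambda>e. b + e" and j="\<lambda>c. c - b"])
         (use b in \<open>auto simp: fdiff_diff fdiff_mono fadd_diff fdiff_add fle_add fadd_le\<close>)
  qed
  also have "\<dots> = fconv f (fconv g h) a"
    unfolding fconv_def sum_distrib_left by (simp add: mult.assoc)
  finally show "fconv (fconv f g) h a = fconv f (fconv g h) a" .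
qed

lemma fconv_delta: "fconv (\<lambda>c. if c = 0 then 1 else 0) g = g"
proof
  fix a :: "'a \<Rightarrow> nat"
  have "fconv (\<lambda>c. if c = 0 then 1 else 0) g a = (\<Sum>c\<in>{..a}. if c = 0 then g (a - c) else 0)"
    unfolding fconv_def by (intro sum.cong) auto
  also have "\<dots> = g a" by (subst sum.delta) auto
  finally show "fconv (\<lambda>c. if c = 0 then 1 else 0) g a = g a" .
qed

lemma fconv_scale: "fconv f (\<lambda>x. s * g x) = (\<lambda>x. s * fconv f g x)"
  unfolding fconv_def by (auto simp: sum_distrib_left fun_eq_iff ac_simps)

lemma fconv_add: "fconv (\<lambda>x. f1 x + f2 x) g = (\<lambda>x. fconv f1 g x + fconv f2 g x)"
  unfolding fconv_def by (auto simp: sum.distrib fun_eq_iff algebra_simps)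

lemma pmf_conv_pmf: "pmf (conv_pmf p q) = fconv (pmf p) (pmf q)"
proof
  fix a :: "'a \<Rightarrow> nat"
  have cp: "conv_pmf p q = map_pmf (\<lambda>(x,y). x + y) (pair_pmf p q)"
    unfolding conv_pmf_def pair_pmf_def map_bind_pmf
    by (simp add: map_bind_pmf plus_fun_def)
  have "(\<lambda>(x,y). x + y) -` {a} = (\<lambda>c. (c, a - c)) ` {..a}"
    by (auto simp: le_fun_def fun_eq_iff image_iff intro!: exI[where x="fst _"])
  hence "pmf (conv_pmf p q) a = measure (measure_pmf (pair_pmf p q)) ((\<lambda>c. (c, a - c)) ` {..a})"
    by (simp add: cp pmf_map)
  also have "\<dots> = sum (pmf (pair_pmf p q)) ((\<lambda>c. (c, a - c)) ` {..a})"
    by (rule measure_measure_pmf_finite) simp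
  also have "\<dots> = fconv (pmf p) (pmf q) a"
    unfolding fconv_def by (subst sum.reindex) (auto simp: inj_on_def pmf_pair)
  finally show "pmf (conv_pmf p q) a = fconv (pmf p) (pmf q) a" .
qed

definition pw :: "('d::finite \<Rightarrow> nat) pmf \<Rightarrow> nat \<Rightarrow> ('d \<Rightarrow> nat) \<Rightarrow> real" where
  "pw p s = pmf (conv_pow p s)"

lemma pw_0: "pw p 0 = (\<lambda>c. if c = 0 then 1 else 0)"
  by (auto simp: pw_def fun_eq_iff zero_fun_def)

lemma pw_Suc: "pw p (Suc s) = fconv (pmf p) (pw p s)"
  by (simp add: pw_def pmf_conv_pmf)

lemma pw_add: "pw p (s + t) = fconv (pw p s) (pw p t)"
proof (induction s)
  case 0
  show ?case unfolding pw_0 fconv_delta by simp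
next
  case (Suc s)
  have "pw p (Suc s + t) = fconv (pmf p) (pw p (s + t))" by (simp add: pw_Suc)
  also have "\<dots> = fconv (pw p (Suc s)) (pw p t)" unfolding Suc pw_Suc fconv_assoc ..
  finally show ?case .
qed

lemma pw_nonneg: "pw p s c \<ge> 0"
  by (simp add: pw_def)


lemma fconv_scale1: "fconv (\<lambda>x. s * f x) g = (\<lambda>x. s * fconv f g x)"
  unfolding fconv_def by (auto simp: sum_distrib_left fun_eq_iff ac_simps)

lemma fconv_moment:
  "(\<lambda>a. real (a j) * fconv f g a) =
   (\<lambda>a. fconv (\<lambda>c. real (c j) * f c) g a + fconv f (\<lambda>c. real (c j) * g c) a)"
proof
  fix a :: "'a \<Rightarrow> nat"
  show "real (a j) * fconv f g a =
        fconv (\<lambda>c. real (c j) * f c) g a + fconv f (\<lambda>c. real (c j) * g c) a"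
    unfolding fconv_def sum_distrib_left sum.distrib[symmetric]
  proof (rule sum.cong[OF refl])
    fix c assume "c \<in> {..a}"
    hence "a j = c j + (a - c) j" by (auto simp: le_fun_def)
    hence eq: "real (a j) = real (c j) + real ((a - c) j)" by simp
    show "real (a j) * (f c * g (a - c)) =
          real (c j) * f c * g (a - c) + f c * (real ((a - c) j) * g (a - c))"
      by (subst eq) (simp only: algebra_simps)
  qed
qed

lemma moment_pw:
  "(\<lambda>c. real (c j) * pw p (Suc s) c) =
   (\<lambda>c. real (Suc s) * fconv (\<lambda>x. real (x j) * pmf p x) (pw p s) c)"
proof (induction s)
  case 0
  have z: "(\<lambda>c. real (c j) * pw p 0 c) = (\<lambda>_. 0)"
    by (auto simp: pw_0 fun_eq_iff zero_fun_def)
  have z2: "fconv f (\<lambda>_. 0) = (\<lambda>_. 0)" for f :: "('a \<Rightarrow> nat) \<Rightarrow> real"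
    by (auto simp: fconv_def fun_eq_iff)
  show ?case
    by (subst pw_Suc, subst fconv_moment) (simp add: z z2)
next
  case (Suc s)
  let ?m = "\<lambda>x. real (x j) * pmf p x"
  have key: "fconv (pmf p) (fconv ?m (pw p s)) = fconv ?m (pw p (Suc s))"
  proof -
    have "fconv (pmf p) (fconv ?m (pw p s)) = fconv (fconv (pmf p) ?m) (pw p s)"
      by (rule fconv_assoc[symmetric])
    also have "fconv (pmf p) ?m = fconv ?m (pmf p)" by (rule fconv_comm)
    also have "fconv (fconv ?m (pmf p)) (pw p s) = fconv ?m (pw p (Suc s))"
      by (simp only: fconv_assoc pw_Suc)
    finally show ?thesis .
  qed
  have "(\<lambda>c. real (c j) * pw p (Suc (Suc s)) c) =
        (\<lambda>a. fconv ?m (pw p (Suc s)) a + fconv (pmf p) (\<lambda>c. real (c j) * pw p (Suc s) c) a)"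
    by (subst pw_Suc, subst fconv_moment) (rule refl)
  also have "\<dots> = (\<lambda>a. fconv ?m (pw p (Suc s)) a + real (Suc s) * fconv ?m (pw p (Suc s)) a)"
    unfolding Suc fconv_scale key ..
  also have "\<dots> = (\<lambda>a. real (Suc (Suc s)) * fconv ?m (pw p (Suc s)) a)"
    by (simp add: fun_eq_iff algebra_simps)
  finally show ?case .
qed

lemma exch:
  "real (s + t) * (\<Sum>c\<in>{..a}. pw p s c * pw p t (a - c) * real (c j))
     = real s * real (a j) * pw p (s + t) a"
proof (cases s)
  case 0
  have "(\<Sum>c\<in>{..a}. pw p s c * pw p t (a - c) * real (c j)) = 0"
    by (intro sum.neutral) (auto simp: 0 pw_0 zero_fun_def)
  thus ?thesis by (simp add: 0)
next
  case (Suc s')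
  let ?m = "\<lambda>x. real (x j) * pmf p x"
  have "(\<Sum>c\<in>{..a}. pw p s c * pw p t (a - c) * real (c j))
        = fconv (\<lambda>c. real (c j) * pw p s c) (pw p t) a"
    unfolding fconv_def by (intro sum.cong) auto
  also have "\<dots> = real s * fconv ?m (pw p (s' + t)) a"
    unfolding Suc moment_pw fconv_scale1 by (simp add: fconv_assoc pw_add)
  finally have 1: "(\<Sum>c\<in>{..a}. pw p s c * pw p t (a - c) * real (c j)) = real s * fconv ?m (pw p (s' + t)) a" .
  have "real (a j) * pw p (s + t) a = real (s + t) * fconv ?m (pw p (s' + t)) a"
    using fun_cong[OF moment_pw[of j p "s' + t"], of a] by (simp add: Suc)
  thus ?thesis unfolding 1 by (simp add: algebra_simps)
qed

definition dlt :: "'d \<Rightarrow> 'd \<Rightarrow> real" where "dlt i j = (if i = j then 1 else 0)"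

lemma prod_zero_at:
  assumes "f i = 0" shows "(\<Prod>x\<in>(UNIV::'d::finite set). f x) = (0::real)"
proof (rule prod_zero)
  show "finite (UNIV::'d set)" by simp
  show "\<exists>a\<in>UNIV. f a = 0" using assms by blast
qed

lemma det_on_rows_mul:
  "det_on UNIV (\<lambda>i j. c i * M i j) = (\<Prod>i\<in>UNIV. c i) * det_on (UNIV::'d::finite set) M"
  unfolding det_on_def sum_distrib_left
  by (intro sum.cong refl) (simp add: prod.distrib algebra_simps)

lemma det_on_col:
  fixes M :: "'d::finite \<Rightarrow> 'd \<Rightarrow> real"
  assumes col: "\<And>j. j \<noteq> t \<Longrightarrow> M j t = 0"
  shows "det_on UNIV M = M t t * det_on UNIV (\<lambda>i j. if i = t then dlt i j else M i j)"
  unfolding det_on_def sum_distrib_left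
proof (intro sum.cong refl)
  fix p assume "p \<in> {p. p permutes (UNIV::'d set)}"
  hence p: "p permutes (UNIV::'d set)" by simp
  let ?M' = "\<lambda>i j. if i = t then dlt i j else M i j"
  have "(\<Prod>i\<in>UNIV. M i (p i)) = M t t * (\<Prod>i\<in>UNIV. ?M' i (p i))"
  proof (cases "p t = t")
    case True
    have "(\<Prod>i\<in>UNIV. M i (p i)) = M t (p t) * (\<Prod>i\<in>UNIV-{t}. M i (p i))"
      using prod.remove[of UNIV t "\<lambda>i. M i (p i)"] by simp
    moreover have "(\<Prod>i\<in>UNIV. ?M' i (p i)) = ?M' t (p t) * (\<Prod>i\<in>UNIV-{t}. ?M' i (p i))"
      using prod.remove[of UNIV t "\<lambda>i. ?M' i (p i)"] by simp
    moreover have "(\<Prod>i\<in>UNIV-{t}. ?M' i (p i)) = (\<Prod>i\<in>UNIV-{t}. M i (p i))"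
      by (intro prod.cong) auto
    ultimately show ?thesis using True by (simp add: dlt_def)
  next
    case False
    define s where "s = inv p t"
    have ps: "p s = t" unfolding s_def using permutes_inverses(1)[OF p] by simp
    with False have st: "s \<noteq> t" by auto
    have "M s (p s) = 0" using ps st col by simp
    hence z1: "(\<Prod>i\<in>UNIV. M i (p i)) = 0" by (rule prod_zero_at[where i=s])
    have "?M' t (p t) = 0" using False by (simp add: dlt_def)
    hence z2: "(\<Prod>i\<in>UNIV. ?M' i (p i)) = 0" by (rule prod_zero_at[where i=t])
    show ?thesis unfolding z1 z2 by simp
  qed
  thus "of_int (sign p) * (\<Prod>i\<in>UNIV. M i (p i)) =
        M t t * (of_int (sign p) * (\<Prod>i\<in>UNIV. ?M' i (p i)))" by simp
qed

lemma det_on_cols: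
  fixes M :: "'d::finite \<Rightarrow> 'd \<Rightarrow> real"
  assumes col: "\<And>t j. t \<in> T \<Longrightarrow> j \<noteq> t \<Longrightarrow> M j t = 0"
  shows "det_on UNIV M = (\<Prod>t\<in>T. M t t) * det_on UNIV (\<lambda>i j. if i \<in> T then dlt i j else M i j)"
proof -
  have "finite T" by simp
  thus ?thesis using col
  proof (induction T rule: finite_induct)
    case empty
    show ?case by simp
  next
    case (insert t T)
    let ?M1 = "\<lambda>i j. if i \<in> T then dlt i j else M i j"
    have IH: "det_on UNIV M = (\<Prod>t\<in>T. M t t) * det_on UNIV ?M1"
      using insert.IH insert.prems by blast
    have "?M1 j t = 0" if "j \<noteq> t" for j
      using insert.prems[of t j] that insert.hyps by (auto simp: dlt_def)
    hence "det_on UNIV ?M1 = ?M1 t t * det_on UNIV (\<lambda>i j. if i = t then dlt i j else ?M1 i j)"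
      by (rule det_on_col)
    also have "(\<lambda>i j. if i = t then dlt i j else ?M1 i j) = (\<lambda>i j. if i \<in> insert t T then dlt i j else M i j)"
      by (auto simp: fun_eq_iff)
    also have "?M1 t t = M t t" using insert.hyps by simp
    finally show ?case using IH insert.hyps by (simp add: mult.assoc)
  qed
qed

lemma det_on_UNIV_det: "det_on UNIV M = det (\<chi> i j. M i j)"
  unfolding det_on_def det_def by simp

lemma det_on_zero:
  fixes M :: "'d::finite \<Rightarrow> 'd \<Rightarrow> real"
  assumes x: "x \<noteq> (\<lambda>_. 0)" and ker: "\<And>j. (\<Sum>i\<in>UNIV. x i * M i j) = 0"
  shows "det_on UNIV M = 0"
proof (rule ccontr)
  let ?X = "(\<chi> i j. M i j) :: real^'d^'d"
  let ?x = "(\<chi> i. x i) :: real^'d"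
  assume "det_on UNIV M \<noteq> 0"
  hence "invertible ?X" by (simp add: det_on_UNIV_det invertible_det_nz)
  then obtain B where B: "?X ** B = mat 1" by (auto simp: invertible_def)
  have "?x v* ?X = 0"
    using ker by (simp add: vector_matrix_mult_def vec_eq_iff mult.commute)
  hence "?x = 0"
    by (metis B vector_matrix_mul_assoc vector_matrix_mul_rid vector_matrix_mult_0)
  hence "x = (\<lambda>_. 0)" by (auto simp: vec_eq_iff fun_eq_iff)
  with x show False by simp
qed

lemma det_on_embed:
  fixes M :: "'d::finite \<Rightarrow> 'd \<Rightarrow> real"
  shows "det_on S M = det_on UNIV (\<lambda>i j. if i \<in> S \<and> j \<in> S then M i j else dlt i j)"
proof -
  let ?M' = "\<lambda>i j. if i \<in> S \<and> j \<in> S then M i j else dlt i j"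
  have sub: "{p. p permutes S} \<subseteq> {p. p permutes (UNIV::'d set)}"
    by (auto intro: permutes_subset)
  have "det_on UNIV ?M' = (\<Sum>p\<in>{p. p permutes S}. of_int (sign p) * (\<Prod>i\<in>UNIV. ?M' i (p i)))"
    unfolding det_on_def
  proof (rule sum.mono_neutral_right)
    show "finite {p. p permutes (UNIV::'d set)}" by (simp add: finite_permutations)
    show "{p. p permutes S} \<subseteq> {p. p permutes (UNIV::'d set)}" by (rule sub)
    show "\<forall>p\<in>{p. p permutes UNIV} - {p. p permutes S}. of_int (sign p) * (\<Prod>i\<in>UNIV. ?M' i (p i)) = 0"
    proof
      fix p assume "p \<in> {p. p permutes UNIV} - {p. p permutes S}"
      hence p: "p permutes UNIV" and np: "\<not> p permutes S" by auto
      have "\<exists>i. i \<notin> S \<and> p i \<noteq> i"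
        using p np unfolding permutes_def by blast
      then obtain i where i: "i \<notin> S" "p i \<noteq> i" by blast
      have "?M' i (p i) = 0" using i by (auto simp: dlt_def)
      hence "(\<Prod>i\<in>UNIV. ?M' i (p i)) = 0" by (rule prod_zero_at[where i=i])
      thus "of_int (sign p) * (\<Prod>i\<in>UNIV. ?M' i (p i)) = 0" by simp
    qed
  qed
  also have "\<dots> = det_on S M"
    unfolding det_on_def
  proof (intro sum.cong refl)
    fix p assume "p \<in> {p. p permutes S}"
    hence p: "p permutes S" by simp
    have "(\<Prod>i\<in>UNIV. ?M' i (p i)) = (\<Prod>i\<in>S. ?M' i (p i)) * (\<Prod>i\<in>UNIV-S. ?M' i (p i))"
      using prod.subset_diff[of S UNIV "\<lambda>i. ?M' i (p i)"] by (simp add: mult.commute)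
    also have "(\<Prod>i\<in>UNIV-S. ?M' i (p i)) = 1"
      by (intro prod.neutral) (use p in \<open>auto simp: permutes_not_in dlt_def\<close>)
    also have "(\<Prod>i\<in>S. ?M' i (p i)) = (\<Prod>i\<in>S. M i (p i))"
      by (intro prod.cong) (use p in \<open>auto simp: permutes_in_image\<close>)
    finally show "of_int (sign p) * (\<Prod>i\<in>UNIV. ?M' i (p i)) = of_int (sign p) * (\<Prod>i\<in>S. M i (p i))"
      by simp
  qed
  finally show ?thesis by simp
qed

lemma box2_PiE: "{..(A::'d::finite \<Rightarrow> 'e::finite \<Rightarrow> nat)} = PiE UNIV (\<lambda>i. {..A i})"
  by (auto simp: le_fun_def PiE_iff)

lemma det_on_expand:
  fixes A :: "'d::finite \<Rightarrow> 'd \<Rightarrow> nat"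
  shows "(\<Sum>C\<in>{..A}. (\<Prod>i\<in>UNIV. W i (C i)) * det_on UNIV (\<lambda>i j. f i (C i) j)) =
         det_on UNIV (\<lambda>i j. \<Sum>c\<in>{..A i}. W i c * f i c j)"
proof -
  have "(\<Sum>C\<in>{..A}. (\<Prod>i\<in>UNIV. W i (C i)) * det_on UNIV (\<lambda>i j. f i (C i) j))
     = (\<Sum>p\<in>{p. p permutes (UNIV::'d set)}. of_int (sign p) *
          (\<Sum>C\<in>{..A}. \<Prod>i\<in>UNIV. W i (C i) * f i (C i) (p i)))"
    unfolding det_on_def sum_distrib_left
    by (subst sum.swap) (simp add: sum_distrib_left prod.distrib algebra_simps)
  also have "\<dots> = det_on UNIV (\<lambda>i j. \<Sum>c\<in>{..A i}. W i c * f i c j)"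
    unfolding det_on_def box2_PiE
    by (intro sum.cong refl) (simp add: prod_sum_PiE)
  finally show ?thesis .
qed

definition nb :: "('d \<Rightarrow> nat) \<Rightarrow> 'd \<Rightarrow> nat" where "nb n i = max (n i) 1"
definition Lmat :: "('d \<Rightarrow> nat) \<Rightarrow> ('d \<Rightarrow> 'd \<Rightarrow> nat) \<Rightarrow> 'd \<Rightarrow> 'd \<Rightarrow> real" where
  "Lmat n A i j = real (nb n i) * dlt i j - real (A i j)"
definition Vp :: "('d::finite \<Rightarrow> ('d \<Rightarrow> nat) pmf) \<Rightarrow> ('d \<Rightarrow> nat) \<Rightarrow> ('d \<Rightarrow> 'd \<Rightarrow> nat) \<Rightarrow> real" where
  "Vp \<nu> n A = (\<Prod>i\<in>UNIV. pw (\<nu> i) (n i) (A i))"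
definition G :: "('d::finite \<Rightarrow> ('d \<Rightarrow> nat) pmf) \<Rightarrow> ('d \<Rightarrow> nat) \<Rightarrow> ('d \<Rightarrow> 'd \<Rightarrow> nat) \<Rightarrow> real" where
  "G \<nu> n A = det_on UNIV (Lmat n A) / (\<Prod>i\<in>UNIV. real (nb n i)) * Vp \<nu> n A"

lemma nb_pos: "nb n i > 0" by (simp add: nb_def)

lemma pw0_eq: "pw p 0 c = (if c = 0 then 1 else 0)" by (simp add: pw_0)

lemma ident:
  fixes \<nu> :: "'d::finite \<Rightarrow> ('d \<Rightarrow> nat) pmf" and r n :: "'d \<Rightarrow> nat" and A :: "'d \<Rightarrow> 'd \<Rightarrow> nat"
  assumes cs: "\<And>j. n j = r j + (\<Sum>i\<in>UNIV. A i j)"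
  shows "(\<Sum>C\<in>{..A}. (\<Prod>i\<in>UNIV. pw (\<nu> i) (r i) (C i)) * G \<nu> (n - r) (A - C)) = G \<nu> n A"
proof -
  define W where "W i c = pw (\<nu> i) (r i) c * pw (\<nu> i) (n i - r i) (A i - c)" for i c
  define Vi where "Vi i = pw (\<nu> i) (n i) (A i)" for i
  have rn: "r i \<le> n i" for i using cs[of i] by simp
  have W_nonneg: "W i c \<ge> 0" for i c by (simp add: W_def pw_nonneg)
  have sumW: "(\<Sum>c\<in>{..A i}. W i c) = Vi i" for i
  proof -
    have "pw (\<nu> i) (n i) = pw (\<nu> i) (r i + (n i - r i))" using rn[of i] by simp
    thus ?thesis unfolding W_def Vi_def pw_add fconv_def by simp
  qed
  have momW: "real (n i) * (\<Sum>c\<in>{..A i}. W i c * real (c j)) = real (r i) * real (A i j) * Vi i" for i j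
  proof -
    have "n i = r i + (n i - r i)" using rn[of i] by simp
    thus ?thesis using exch[of "r i" "n i - r i" "\<nu> i" "A i" j] unfolding W_def Vi_def
      by (metis (no_types, lifting))
  qed
  define D' where "D' = (\<Prod>i\<in>UNIV. real (nb (n - r) i))"
  have termeq: "(\<Prod>i\<in>UNIV. pw (\<nu> i) (r i) (C i)) * G \<nu> (n - r) (A - C)
      = (\<Prod>i\<in>UNIV. W i (C i)) * det_on UNIV (Lmat (n - r) (A - C)) / D'" for C
    unfolding G_def Vp_def W_def D'_def by (simp add: prod.distrib)
  show ?thesis
  proof (cases "\<exists>i0. Vi i0 = 0")
    case True
    then obtain i0 where i0: "Vi i0 = 0" by blast
    have W0: "W i0 c = 0" if "c \<in> {..A i0}" for c
      using sumW[of i0] i0 W_nonneg sum_nonneg_eq_0_iff[of "{..A i0}" "W i0"] that by simp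
    have P0: "(\<Prod>i\<in>UNIV. W i (C i)) = 0" if "C \<in> {..A}" for C
      using that W0[of "C i0"] by (intro prod_zero_at[where i=i0]) (auto simp: le_fun_def)
    have "(\<Sum>C\<in>{..A}. (\<Prod>i\<in>UNIV. pw (\<nu> i) (r i) (C i)) * G \<nu> (n - r) (A - C)) = 0"
      unfolding termeq by (intro sum.neutral ballI) (simp add: P0)
    moreover have "G \<nu> n A = 0"
      unfolding G_def Vp_def using prod_zero_at[where i=i0 and f="\<lambda>i. pw (\<nu> i) (n i) (A i)"] i0
      by (simp add: Vi_def)
    ultimately show ?thesis by simp
  next
    case False
    hence Vpos: "Vi i > 0" for i using pw_nonneg[of "\<nu> i" "n i" "A i"] by (auto simp: Vi_def less_le)
    define T where "T = {i. n i = r i \<and> n i > 0}"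
    define rho where "rho i = (if i \<in> T then 1 else real (nb (n - r) i) / real (nb n i))" for i
    define Mm where "Mm i j = (if i \<in> T then dlt i j else Lmat n A i j)" for i j
    define E where "E i j = (\<Sum>c\<in>{..A i}. W i c * (real (nb (n - r) i) * dlt i j - real (A i j - c j)))" for i j
    have LHS: "(\<Sum>C\<in>{..A}. (\<Prod>i\<in>UNIV. pw (\<nu> i) (r i) (C i)) * G \<nu> (n - r) (A - C))
        = det_on UNIV E / D'"
    proof -
      have "(\<Sum>C\<in>{..A}. (\<Prod>i\<in>UNIV. pw (\<nu> i) (r i) (C i)) * G \<nu> (n - r) (A - C))
          = (\<Sum>C\<in>{..A}. (\<Prod>i\<in>UNIV. W i (C i)) *
               det_on UNIV (\<lambda>i j. real (nb (n - r) i) * dlt i j - real (A i j - C i j))) / D'"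
      proof -
        have "Lmat (n - r) (A - C) = (\<lambda>i j. real (nb (n - r) i) * dlt i j - real (A i j - C i j))" for C
          by (simp add: fun_eq_iff Lmat_def)
        thus ?thesis unfolding termeq sum_divide_distrib by simp
      qed
      also have "\<dots> = det_on UNIV E / D'"
        unfolding E_def by (subst det_on_expand) (rule refl)
      finally show ?thesis .
    qed
    have Eeq: "E i j = Vi i * rho i * Mm i j" for i j
    proof -
      have "E i j = (\<Sum>c\<in>{..A i}. W i c * (real (nb (n - r) i) * dlt i j - real (A i j)) + W i c * real (c j))"
        unfolding E_def
      proof (rule sum.cong[OF refl])
        fix c assume "c \<in> {..A i}"
        hence "c j \<le> A i j" by (auto simp: le_fun_def)
        thus "W i c * (real (nb (n - r) i) * dlt i j - real (A i j - c j)) =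
              W i c * (real (nb (n - r) i) * dlt i j - real (A i j)) + W i c * real (c j)"
          by (simp add: of_nat_diff algebra_simps)
      qed
      also have "\<dots> = Vi i * (real (nb (n - r) i) * dlt i j - real (A i j)) + (\<Sum>c\<in>{..A i}. W i c * real (c j))"
        unfolding sum.distrib sum_distrib_right[symmetric] sumW ..
      finally have E1: "E i j = Vi i * (real (nb (n - r) i) * dlt i j - real (A i j)) + (\<Sum>c\<in>{..A i}. W i c * real (c j))" .
      show ?thesis
      proof (cases "i \<in> T")
        case True
        hence nr: "n i = r i" "n i > 0" by (auto simp: T_def)
        have X: "(\<Sum>c\<in>{..A i}. W i c * real (c j)) = real (A i j) * Vi i"
          using momW[of i j] nr by simp
        have "nb (n - r) i = 1" using nr by (simp add: nb_def)
        thus ?thesis unfolding E1 X using True by (simp add: rho_def Mm_def algebra_simps)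
      next
        case False
        show ?thesis
        proof (cases "n i = 0")
          case True
          hence r0: "r i = 0" using rn[of i] by simp
          have "Vi i = pw (\<nu> i) 0 (A i)" using True by (simp add: Vi_def)
          hence A0: "A i = 0" using Vpos[of i] by (simp add: pw0_eq split: if_splits)
          have X: "(\<Sum>c\<in>{..A i}. W i c * real (c j)) = 0"
            by (intro sum.neutral) (auto simp: A0 le_fun_def)
          show ?thesis unfolding E1 X using True False r0 A0
            by (simp add: rho_def Mm_def Lmat_def nb_def T_def)
        next
          case n0: False
          hence nr: "n i > r i" using False rn[of i] by (auto simp: T_def)
          have X: "(\<Sum>c\<in>{..A i}. W i c * real (c j)) = real (r i) * real (A i j) * Vi i / real (n i)"
            using momW[of i j] n0 by (simp add: field_simps)
          have nb1: "nb (n - r) i = n i - r i" "nb n i = n i" using nr by (auto simp: nb_def)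
          show ?thesis unfolding E1 X using False nr
            by (simp add: rho_def Mm_def Lmat_def nb1 of_nat_diff field_simps)
        qed
      qed
    qed
    have detE: "det_on UNIV E = (\<Prod>i\<in>UNIV. Vi i * rho i) * det_on UNIV Mm"
    proof -
      have "E = (\<lambda>i j. (Vi i * rho i) * Mm i j)" using Eeq by (auto simp: fun_eq_iff)
      thus ?thesis by (simp add: det_on_rows_mul)
    qed
    have colT: "Lmat n A j t = 0" if "t \<in> T" "j \<noteq> t" for t j
    proof -
      have "(\<Sum>i\<in>UNIV. A i t) = 0" using cs[of t] that by (simp add: T_def)
      hence "A j t = 0" by simp
      thus ?thesis using that by (simp add: Lmat_def dlt_def)
    qed
    have detL: "det_on UNIV (Lmat n A) = (\<Prod>t\<in>T. Lmat n A t t) * det_on UNIV Mm"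
      unfolding Mm_def by (rule det_on_cols) (rule colT)
    have diagT: "Lmat n A t t = real (n t)" if "t \<in> T" for t
    proof -
      have "(\<Sum>i\<in>UNIV. A i t) = 0" using cs[of t] that by (simp add: T_def)
      hence "A t t = 0" by simp
      thus ?thesis using that by (simp add: Lmat_def dlt_def nb_def T_def)
    qed
    have prodT: "(\<Prod>t\<in>T. Lmat n A t t) = (\<Prod>i\<in>UNIV. if i \<in> T then real (n i) else 1)"
      by (simp add: prod.If_cases diagT)
    have keyprod: "(\<Prod>i\<in>UNIV. rho i) * (\<Prod>i\<in>UNIV. real (nb n i)) = (\<Prod>t\<in>T. Lmat n A t t) * D'"
    proof -
      have "rho i * real (nb n i) = (if i \<in> T then real (n i) else 1) * real (nb (n - r) i)" for i
        using nb_pos[of n i] by (auto simp: rho_def T_def nb_def)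
      hence "(\<Prod>i\<in>UNIV. rho i * real (nb n i)) = (\<Prod>i\<in>UNIV. (if i \<in> T then real (n i) else 1) * real (nb (n - r) i))"
        by simp
      thus ?thesis unfolding prodT D'_def prod.distrib .
    qed
    have D'pos: "D' > 0" unfolding D'_def using nb_pos by (intro prod_pos) simp
    have nbpos: "(\<Prod>i\<in>UNIV. real (nb n i)) > 0" using nb_pos by (intro prod_pos) simp
    have rho_eq: "(\<Prod>i\<in>UNIV. rho i) = (\<Prod>t\<in>T. Lmat n A t t) * D' / (\<Prod>i\<in>UNIV. real (nb n i))"
    proof -
      have gen: "\<And>a b c::real. a * b = c \<Longrightarrow> b > 0 \<Longrightarrow> a = c / b" by (simp add: eq_divide_eq)
      show ?thesis by (rule gen[OF keyprod nbpos])
    qed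
    have "det_on UNIV E / D' = (\<Prod>i\<in>UNIV. Vi i) * (\<Prod>i\<in>UNIV. rho i) * det_on UNIV Mm / D'"
      by (simp add: detE prod.distrib)
    also have "\<dots> = (\<Prod>i\<in>UNIV. Vi i) * ((\<Prod>t\<in>T. Lmat n A t t) * D' / (\<Prod>i\<in>UNIV. real (nb n i))) * det_on UNIV Mm / D'"
      by (simp only: rho_eq)
    also have "\<dots> = det_on UNIV (Lmat n A) / (\<Prod>i\<in>UNIV. real (nb n i)) * (\<Prod>i\<in>UNIV. Vi i)"
      using D'pos by (simp add: detL field_simps)
    also have "\<dots> = G \<nu> n A" by (simp add: G_def Vp_def Vi_def)
    finally show ?thesis using LHS by simp
  qed
qed


lemma det_on_dlt: "det_on (UNIV::'d::finite set) dlt = 1"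
proof -
  have "(\<chi> i j. dlt i j) = (mat 1 :: real^'d^'d)" by (simp add: mat_def dlt_def vec_eq_iff)
  thus ?thesis by (simp add: det_on_UNIV_det)
qed

lemma G_base:
  fixes \<nu> :: "'d::finite \<Rightarrow> ('d \<Rightarrow> nat) pmf" and n :: "'d \<Rightarrow> nat" and A :: "'d \<Rightarrow> 'd \<Rightarrow> nat"
  assumes cs: "\<And>j. n j = (\<Sum>i\<in>UNIV. A i j)"
  shows "G \<nu> n A = (if A = 0 then 1 else 0)"
proof (cases "A = 0")
  case True
  hence n0: "n i = 0" for i using cs[of i] by simp
  have L: "Lmat n A = dlt" using True n0 by (auto simp: fun_eq_iff Lmat_def nb_def)
  have "Vp \<nu> n A = 1" using True n0 by (simp add: Vp_def pw0_eq)
  thus ?thesis unfolding G_def L det_on_dlt using True n0 by (simp add: nb_def)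
next
  case False
  show ?thesis
  proof (cases "Vp \<nu> n A = 0")
    case True
    thus ?thesis using False by (simp add: G_def)
  next
    case Vnz: False
    have Ai0: "A i = 0" if "n i = 0" for i
    proof -
      have "pw (\<nu> i) (n i) (A i) \<noteq> 0"
        using Vnz unfolding Vp_def by (metis prod_zero_at)
      thus ?thesis using that by (simp add: pw0_eq split: if_splits)
    qed
    define x where "x i = (if n i > 0 then 1 else 0::real)" for i
    obtain i0 j0 where ij: "A i0 j0 \<noteq> 0" using False by (auto simp: fun_eq_iff)
    have "A i0 j0 \<le> n j0" unfolding cs by (rule member_le_sum) auto
    hence "n j0 > 0" using ij by simp
    hence xnz: "x \<noteq> (\<lambda>_. 0)" by (auto simp: fun_eq_iff x_def intro!: exI[of _ j0])
    have ker: "(\<Sum>i\<in>UNIV. x i * Lmat n A i j) = 0" for j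
    proof -
      have "x i * Lmat n A i j = (if i = j then (if n j > 0 then real (n j) else 0) else 0) - real (A i j)" for i
        using Ai0[of i] by (auto simp: x_def Lmat_def dlt_def nb_def)
      hence "(\<Sum>i\<in>UNIV. x i * Lmat n A i j) = (if n j > 0 then real (n j) else 0) - real (\<Sum>i\<in>UNIV. A i j)"
        by (simp add: sum_subtractf)
      also have "\<dots> = 0" using cs[of j] by auto
      finally show ?thesis .
    qed
    have "det_on UNIV (Lmat n A) = 0" by (rule det_on_zero[OF xnz ker])
    thus ?thesis using False by (simp add: G_def)
  qed
qed

lemma prob_bind_pmf:
  "measure_pmf.prob (bind_pmf M f) X = measure_pmf.expectation M (\<lambda>x. measure_pmf.prob (f x) X)"
  unfolding measure_pmf_bind
  by (rule measure_pmf.measure_bind[where N="count_space UNIV"]) (auto simp: measure_pmf_in_subprob_algebra)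

definition shiftA :: "('d \<Rightarrow> 'd \<Rightarrow> nat) \<Rightarrow> ('d \<Rightarrow> nat) \<times> ('d \<Rightarrow> 'd \<Rightarrow> nat) \<Rightarrow> ('d \<Rightarrow> nat) \<times> ('d \<Rightarrow> 'd \<Rightarrow> nat)" where
  "shiftA A s = (fst s, \<lambda>i j. A i j + snd s i j)"

lemma step_shift: "bp_step \<nu> (shiftA A s) = map_pmf (shiftA A) (bp_step \<nu> s)"
  unfolding bp_step_def shiftA_def map_pmf_comp by (simp add: add.assoc)

lemma bind_map_shift:
  "bind_pmf (map_pmf (shiftA A) X) (bp_step \<nu>) = map_pmf (shiftA A) (bind_pmf X (bp_step \<nu>))"
  unfolding bind_map_pmf map_bind_pmf step_shift ..

lemma first_step:
  "bp_state \<nu> r (Suc N) =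
     bind_pmf (bp_step \<nu> (r, \<lambda>_ _. 0)) (\<lambda>s. map_pmf (shiftA (snd s)) (bp_state \<nu> (fst s) N))"
proof (induction N)
  case 0
  have "(\<lambda>s. map_pmf (shiftA (snd s)) (bp_state \<nu> (fst s) 0)) = return_pmf"
    by (auto simp: fun_eq_iff shiftA_def)
  thus ?case by (simp add: bind_return_pmf bind_return_pmf')
next
  case (Suc N)
  have "bp_state \<nu> r (Suc (Suc N)) = bind_pmf (bp_state \<nu> r (Suc N)) (bp_step \<nu>)" by simp
  also have "\<dots> = bind_pmf (bp_step \<nu> (r, \<lambda>_ _. 0))
      (\<lambda>s. bind_pmf (map_pmf (shiftA (snd s)) (bp_state \<nu> (fst s) N)) (bp_step \<nu>))"
    unfolding Suc bind_assoc_pmf ..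
  also have "\<dots> = bind_pmf (bp_step \<nu> (r, \<lambda>_ _. 0))
      (\<lambda>s. map_pmf (shiftA (snd s)) (bp_state \<nu> (fst s) (Suc N)))"
    unfolding bind_map_shift by simp
  finally show ?case .
qed

definition Ev :: "('d::finite \<Rightarrow> nat) \<Rightarrow> ('d \<Rightarrow> int) \<Rightarrow> ('d \<Rightarrow> 'd \<Rightarrow> int) \<Rightarrow> (('d \<Rightarrow> nat) \<times> ('d \<Rightarrow> 'd \<Rightarrow> nat)) set" where
  "Ev r n k = {(Z, A). Z = (\<lambda>_. 0) \<and> (\<forall>j. int (r j + (\<Sum>i\<in>UNIV. A i j)) = n j)
               \<and> (\<forall>i j. i \<noteq> j \<longrightarrow> int (A i j) = k i j)}"

definition Q :: "('d::finite \<Rightarrow> ('d \<Rightarrow> nat) pmf) \<Rightarrow> nat \<Rightarrow> ('d \<Rightarrow> nat) \<Rightarrow> ('d \<Rightarrow> int) \<Rightarrow> ('d \<Rightarrow> 'd \<Rightarrow> int) \<Rightarrow> real" where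
  "Q \<nu> N r n k = measure_pmf.prob (bp_state \<nu> r N) (Ev r n k)"

lemma prob_OA_Q: "prob_OA \<nu> r n k = (SUP N. Q \<nu> N r n k)"
  unfolding prob_OA_def Q_def Ev_def ..

definition colsum :: "('d::finite \<Rightarrow> 'd \<Rightarrow> nat) \<Rightarrow> 'd \<Rightarrow> nat" where
  "colsum C j = (\<Sum>i\<in>UNIV. C i j)"

definition PiC :: "('d::finite \<Rightarrow> ('d \<Rightarrow> nat) pmf) \<Rightarrow> ('d \<Rightarrow> nat) \<Rightarrow> ('d \<Rightarrow> 'd \<Rightarrow> nat) pmf" where
  "PiC \<nu> r = Pi_pmf UNIV (\<lambda>_. 0) (\<lambda>i. conv_pow (\<nu> i) (r i))"

lemma shift_Ev:
  "shiftA C -` Ev r n k = Ev (colsum C) (\<lambda>j. n j - int (r j)) (\<lambda>i j. k i j - int (C i j))"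
  unfolding Ev_def shiftA_def colsum_def by (auto simp: sum.distrib algebra_simps)

lemma Qrec:
  "Q \<nu> (Suc N) r n k = measure_pmf.expectation (PiC \<nu> r)
      (\<lambda>C. Q \<nu> N (colsum C) (\<lambda>j. n j - int (r j)) (\<lambda>i j. k i j - int (C i j)))"
proof -
  have "Q \<nu> (Suc N) r n k = measure_pmf.expectation (bp_step \<nu> (r, \<lambda>_ _. 0))
      (\<lambda>s. measure_pmf.prob (map_pmf (shiftA (snd s)) (bp_state \<nu> (fst s) N)) (Ev r n k))"
    unfolding Q_def first_step prob_bind_pmf ..
  also have "\<dots> = measure_pmf.expectation (PiC \<nu> r)
      (\<lambda>C. Q \<nu> N (colsum C) (\<lambda>j. n j - int (r j)) (\<lambda>i j. k i j - int (C i j)))"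
    unfolding bp_step_def PiC_def integral_map_pmf measure_map_pmf Q_def
    by (simp add: shift_Ev colsum_def[symmetric])
  finally show ?thesis .
qed


lemma step_zero: "bp_step \<nu> (\<lambda>_. 0, A) = return_pmf (\<lambda>_. 0, A)"
  unfolding bp_step_def by simp

lemma prob_le1: "measure_pmf.prob M X \<le> 1" by simp

lemma Q_mono: "Q \<nu> N r n k \<le> Q \<nu> (Suc N) r n k"
proof -
  let ?X = "bp_state \<nu> r N" and ?E = "Ev r n k"
  have le: "indicator ?E s \<le> measure_pmf.prob (bp_step \<nu> s) ?E" for s
  proof (cases "s \<in> ?E")
    case True
    then obtain A where s: "s = (\<lambda>_. 0, A)" by (auto simp: Ev_def)
    show ?thesis using True unfolding s step_zero by simp
  qed simp
  have "Q \<nu> N r n k = measure_pmf.expectation ?X (indicator ?E)"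
    by (simp add: Q_def)
  also have "\<dots> \<le> measure_pmf.expectation ?X (\<lambda>s. measure_pmf.prob (bp_step \<nu> s) ?E)"
  proof (rule integral_mono)
    show "integrable (measure_pmf ?X) (indicator ?E :: _ \<Rightarrow> real)"
      by (rule measure_pmf.integrable_const_bound[where B=1]) auto
    show "integrable (measure_pmf ?X) (\<lambda>s. measure_pmf.prob (bp_step \<nu> s) ?E)"
      by (rule measure_pmf.integrable_const_bound[where B=1]) auto
  qed (rule le)
  also have "\<dots> = Q \<nu> (Suc N) r n k"
    by (simp add: Q_def prob_bind_pmf)
  finally show ?thesis .
qed

lemma Q_nonneg: "Q \<nu> N r n k \<ge> 0" by (simp add: Q_def)
lemma Q_le1: "Q \<nu> N r n k \<le> 1" by (simp add: Q_def)

lemma Q_lim: "(\<lambda>N. Q \<nu> N r n k) \<longlonglongrightarrow> prob_OA \<nu> r n k"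
  unfolding prob_OA_Q
  by (rule LIMSEQ_incseq_SUP) (auto intro: incseq_SucI Q_mono bdd_aboveI2[where M=1] Q_le1)

lemma bp_state_zero: "bp_state \<nu> (\<lambda>_. 0) N = return_pmf (\<lambda>_. 0, \<lambda>_ _. 0)"
  by (induction N) (simp_all add: bind_return_pmf step_zero)


lemma ev_box:
  fixes C A :: "'d::finite \<Rightarrow> 'd \<Rightarrow> nat"
  assumes cs: "\<And>j. n j = r j + (\<Sum>i\<in>UNIV. A i j)"
    and ev: "(Z', A') \<in> Ev (colsum C) (\<lambda>j. int (n j) - int (r j)) (\<lambda>i j. int (A i j) - int (C i j))"
  shows "C \<le> A"
proof -
  have h1: "int (colsum C j + (\<Sum>l\<in>UNIV. A' l j)) = int (n j) - int (r j)" for j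
    using ev by (simp add: Ev_def)
  have h2: "C l j + A' l j = A l j" if "l \<noteq> j" for l j
  proof -
    have "int (A' l j) = int (A l j) - int (C l j)" using ev that by (auto simp: Ev_def)
    thus ?thesis by linarith
  qed
  have "C i j \<le> A i j" for i j
  proof (cases "i = j")
    case False thus ?thesis using h2[of i j] by simp
  next
    case True
    have "int (colsum C j + (\<Sum>l\<in>UNIV. A' l j)) = int (\<Sum>l\<in>UNIV. A l j)"
      using h1[of j] cs[of j] by simp
    hence e1: "colsum C j + (\<Sum>l\<in>UNIV. A' l j) = (\<Sum>l\<in>UNIV. A l j)"
      by (simp only: of_nat_eq_iff)
    have "colsum C j + (\<Sum>l\<in>UNIV. A' l j) = (\<Sum>l\<in>UNIV. C l j + A' l j)"
      by (simp add: colsum_def sum.distrib)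
    also have "\<dots> = (C j j + A' j j) + (\<Sum>l\<in>UNIV-{j}. C l j + A' l j)"
      by (rule sum.remove) auto
    also have "(\<Sum>l\<in>UNIV-{j}. C l j + A' l j) = (\<Sum>l\<in>UNIV-{j}. A l j)"
      by (intro sum.cong) (auto simp: h2)
    finally have e2: "colsum C j + (\<Sum>l\<in>UNIV. A' l j) = C j j + A' j j + (\<Sum>l\<in>UNIV-{j}. A l j)" .
    have e3: "(\<Sum>l\<in>UNIV. A l j) = A j j + (\<Sum>l\<in>UNIV-{j}. A l j)"
      by (rule sum.remove) auto
    from e1 e2 e3 have "C j j + A' j j = A j j" by simp
    thus ?thesis using True by simp
  qed
  thus ?thesis by (simp add: le_fun_def)
qed

lemma pmf_PiC: "pmf (PiC \<nu> r) C = (\<Prod>i\<in>UNIV. pw (\<nu> i) (r i) (C i))"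
  unfolding PiC_def pw_def by (rule pmf_Pi') auto

lemma Qrec_box:
  fixes A :: "'d::finite \<Rightarrow> 'd \<Rightarrow> nat"
  assumes cs: "\<And>j. n j = r j + (\<Sum>i\<in>UNIV. A i j)"
  shows "Q \<nu> (Suc N) r (\<lambda>j. int (n j)) (\<lambda>i j. int (A i j)) =
    (\<Sum>C\<in>{..A}. (\<Prod>i\<in>UNIV. pw (\<nu> i) (r i) (C i)) *
        Q \<nu> N (colsum C) (\<lambda>j. int ((n - r) j)) (\<lambda>i j. int ((A - C) i j)))"
proof -
  have rn: "r j \<le> n j" for j using cs[of j] by simp
  have "Q \<nu> (Suc N) r (\<lambda>j. int (n j)) (\<lambda>i j. int (A i j)) =
     (\<Sum>C\<in>{..A}. Q \<nu> N (colsum C) (\<lambda>j. int (n j) - int (r j)) (\<lambda>i j. int (A i j) - int (C i j)) * pmf (PiC \<nu> r) C)"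
    unfolding Qrec
  proof (rule integral_measure_pmf_real)
    fix C assume "Q \<nu> N (colsum C) (\<lambda>j. int (n j) - int (r j)) (\<lambda>i j. int (A i j) - int (C i j)) \<noteq> 0"
    hence "Ev (colsum C) (\<lambda>j. int (n j) - int (r j)) (\<lambda>i j. int (A i j) - int (C i j)) \<noteq> {}"
      by (auto simp: Q_def)
    then obtain Z' A' where "(Z', A') \<in> Ev (colsum C) (\<lambda>j. int (n j) - int (r j)) (\<lambda>i j. int (A i j) - int (C i j))"
      by auto
    from ev_box[OF cs this] show "C \<in> {..A}" by simp
  qed simp
  also have "\<dots> = (\<Sum>C\<in>{..A}. (\<Prod>i\<in>UNIV. pw (\<nu> i) (r i) (C i)) *
        Q \<nu> N (colsum C) (\<lambda>j. int ((n - r) j)) (\<lambda>i j. int ((A - C) i j)))"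
  proof (rule sum.cong[OF refl])
    fix C assume "C \<in> {..A}"
    hence CA: "C i j \<le> A i j" for i j by (auto simp: le_fun_def)
    have "(\<lambda>j. int (n j) - int (r j)) = (\<lambda>j. int ((n - r) j))" using rn by (auto simp: fun_eq_iff of_nat_diff)
    moreover have "(\<lambda>i j. int (A i j) - int (C i j)) = (\<lambda>i j. int ((A - C) i j))" using CA by (auto simp: fun_eq_iff of_nat_diff)
    ultimately show "Q \<nu> N (colsum C) (\<lambda>j. int (n j) - int (r j)) (\<lambda>i j. int (A i j) - int (C i j)) * pmf (PiC \<nu> r) C =
        (\<Prod>i\<in>UNIV. pw (\<nu> i) (r i) (C i)) * Q \<nu> N (colsum C) (\<lambda>j. int ((n - r) j)) (\<lambda>i j. int ((A - C) i j))"
      by (simp add: pmf_PiC mult.commute)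
  qed
  finally show ?thesis .
qed

definition PP :: "('d::finite \<Rightarrow> ('d \<Rightarrow> nat) pmf) \<Rightarrow> ('d \<Rightarrow> nat) \<Rightarrow> ('d \<Rightarrow> nat) \<Rightarrow> ('d \<Rightarrow> 'd \<Rightarrow> nat) \<Rightarrow> real" where
  "PP \<nu> r n A = prob_OA \<nu> r (\<lambda>j. int (n j)) (\<lambda>i j. int (A i j))"

lemma Prec:
  fixes A :: "'d::finite \<Rightarrow> 'd \<Rightarrow> nat"
  assumes cs: "\<And>j. n j = r j + (\<Sum>i\<in>UNIV. A i j)"
  shows "PP \<nu> r n A = (\<Sum>C\<in>{..A}. (\<Prod>i\<in>UNIV. pw (\<nu> i) (r i) (C i)) * PP \<nu> (colsum C) (n - r) (A - C))"
proof (rule LIMSEQ_unique)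
  show "(\<lambda>N. Q \<nu> (Suc N) r (\<lambda>j. int (n j)) (\<lambda>i j. int (A i j))) \<longlonglongrightarrow> PP \<nu> r n A"
    unfolding PP_def by (rule LIMSEQ_Suc[OF Q_lim])
  show "(\<lambda>N. Q \<nu> (Suc N) r (\<lambda>j. int (n j)) (\<lambda>i j. int (A i j))) \<longlonglongrightarrow>
      (\<Sum>C\<in>{..A}. (\<Prod>i\<in>UNIV. pw (\<nu> i) (r i) (C i)) * PP \<nu> (colsum C) (n - r) (A - C))"
    unfolding Qrec_box[OF cs] PP_def
    by (intro tendsto_sum tendsto_mult_left Q_lim)
qed

lemma PP_zero:
  fixes A :: "'d::finite \<Rightarrow> 'd \<Rightarrow> nat"
  assumes cs: "\<And>j. n j = (\<Sum>i\<in>UNIV. A i j)"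
  shows "PP \<nu> (\<lambda>_. 0) n A = (if A = 0 then 1 else 0)"
proof -
  have mem: "((\<lambda>_. 0, \<lambda>_ _. 0) \<in> Ev (\<lambda>_. 0) (\<lambda>j. int (n j)) (\<lambda>i j. int (A i j))) \<longleftrightarrow> A = 0"
  proof
    assume "(\<lambda>_. 0, \<lambda>_ _. 0) \<in> Ev (\<lambda>_. 0) (\<lambda>j. int (n j)) (\<lambda>i j. int (A i j))"
    hence "n j = 0" for j by (auto simp: Ev_def)
    hence "A i j = 0" for i j using cs[of j] by simp
    thus "A = 0" by (auto simp: fun_eq_iff)
  next
    assume "A = 0"
    hence "n j = 0" for j using cs[of j] by simp
    with \<open>A = 0\<close> show "(\<lambda>_. 0, \<lambda>_ _. 0) \<in> Ev (\<lambda>_. 0) (\<lambda>j. int (n j)) (\<lambda>i j. int (A i j))"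
      by (auto simp: Ev_def)
  qed
  have "Q \<nu> N (\<lambda>_. 0) (\<lambda>j. int (n j)) (\<lambda>i j. int (A i j)) = (if A = 0 then 1 else 0)" for N
  proof -
    have "Q \<nu> N (\<lambda>_. 0) (\<lambda>j. int (n j)) (\<lambda>i j. int (A i j)) =
          indicator (Ev (\<lambda>_. 0) (\<lambda>j. int (n j)) (\<lambda>i j. int (A i j))) (\<lambda>_. 0, \<lambda>_ _. 0)"
      by (simp add: Q_def bp_state_zero)
    also have "\<dots> = (if A = 0 then 1 else 0)" unfolding indicator_def mem by simp
    finally show ?thesis .
  qed
  thus ?thesis unfolding PP_def prob_OA_Q by simp
qed

lemma main:
  fixes \<nu> :: "'d::finite \<Rightarrow> ('d \<Rightarrow> nat) pmf"
  shows "\<forall>r n (A :: 'd \<Rightarrow> 'd \<Rightarrow> nat). (\<forall>j. n j = r j + (\<Sum>i\<in>UNIV. A i j)) \<longrightarrow> sum n UNIV = s \<longrightarrow> PP \<nu> r n A = G \<nu> n A"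
proof (induction s rule: less_induct)
  case (less s)
  show ?case
  proof (intro allI impI)
    fix r n and A :: "'d \<Rightarrow> 'd \<Rightarrow> nat"
    assume cs: "\<forall>j. n j = r j + (\<Sum>i\<in>UNIV. A i j)" and sn: "sum n UNIV = s"
    show "PP \<nu> r n A = G \<nu> n A"
    proof (cases "r = (\<lambda>_. 0)")
      case True
      have cs0: "n j = (\<Sum>i\<in>UNIV. A i j)" for j using cs True by simp
      show ?thesis unfolding True PP_zero[OF cs0] G_base[OF cs0] ..
    next
      case False
      then obtain j0 where j0: "r j0 \<noteq> 0" by auto
      have rn: "r j \<le> n j" for j using cs by (metis le_add1)
      have sr: "sum r UNIV > 0" using j0 by (metis finite gr0I sum_eq_0_iff UNIV_I)
      have "sum (n - r) UNIV + sum r UNIV = sum n UNIV"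
        by (simp add: sum.distrib[symmetric] rn)
      hence lt: "sum (n - r) UNIV < s" using sr sn by simp
      have inner: "PP \<nu> (colsum C) (n - r) (A - C) = G \<nu> (n - r) (A - C)" if "C \<in> {..A}" for C
      proof -
        have CA: "C i j \<le> A i j" for i j using that by (auto simp: le_fun_def)
        have "(n - r) j = colsum C j + (\<Sum>i\<in>UNIV. (A - C) i j)" for j
        proof -
          have "(\<Sum>i\<in>UNIV. A i j) = (\<Sum>i\<in>UNIV. C i j + (A - C) i j)"
            by (intro sum.cong) (auto simp: CA)
          thus ?thesis using cs by (simp add: colsum_def sum.distrib)
        qed
        thus ?thesis using less.IH[OF lt] by blast
      qed
      have "PP \<nu> r n A = (\<Sum>C\<in>{..A}. (\<Prod>i\<in>UNIV. pw (\<nu> i) (r i) (C i)) * PP \<nu> (colsum C) (n - r) (A - C))"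
        by (rule Prec) (use cs in blast)
      also have "\<dots> = (\<Sum>C\<in>{..A}. (\<Prod>i\<in>UNIV. pw (\<nu> i) (r i) (C i)) * G \<nu> (n - r) (A - C))"
        by (intro sum.cong refl) (simp add: inner)
      also have "\<dots> = G \<nu> n A"
        by (rule ident) (use cs in blast)
      finally show ?thesis .
    qed
  qed
qed

theorem theorem1p2:
  fixes \<nu> :: "'d::finite \<Rightarrow> ('d \<Rightarrow> nat) pmf"
    and r n :: "'d \<Rightarrow> int" and k :: "'d \<Rightarrow> 'd \<Rightarrow> int"
  assumes d2: "CARD('d) \<ge> 2"
    and mean_fin: "\<And>i j. integrable (measure_pmf (\<nu> i)) (\<lambda>z. real (z j))"
    and irred: "irreducible_mat (mean_matrix \<nu>)"
    and nondeg: "\<not> degenerate \<nu>"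
    and crit: "spectral_radius_le (mean_matrix \<nu>) 1"
    and r_nonneg: "\<And>i. r i \<ge> 0"
    and r_pos: "(\<Sum>i\<in>UNIV. r i) \<ge> 1"
    and k_nonneg: "\<And>i j. i \<noteq> j \<Longrightarrow> k i j \<ge> 0"
    and k_diag: "\<And>j. - k j j = r j + (\<Sum>i\<in>UNIV - {j}. k i j)"
    and n_ge: "\<And>i. n i \<ge> - k i i"
  shows "prob_OA \<nu> (\<lambda>i. nat (r i)) n k =
    det_on {i. n i \<noteq> 0} (\<lambda>i j. - real_of_int (k i j))
      / (\<Prod>i\<in>UNIV. real_of_int (max (n i) 1))
      * (\<Prod>i\<in>UNIV. pmf (conv_pow (\<nu> i) (nat (n i)))
            (\<lambda>j. if j = i then nat (n i + k i i) else nat (k i j)))"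
proof -
  define r0 where "r0 i = nat (r i)" for i
  define n0 where "n0 i = nat (n i)" for i
  define A0 where "A0 i = (\<lambda>j. if j = i then nat (n i + k i i) else nat (k i j))" for i
  have sumk: "(\<Sum>i\<in>UNIV - {j}. k i j) \<ge> 0" for j by (intro sum_nonneg) (auto intro: k_nonneg)
  have kjj: "- k j j \<ge> r j" for j using k_diag[of j] sumk[of j] by simp
  have n_nonneg: "n i \<ge> 0" for i using n_ge[of i] kjj[of i] r_nonneg[of i] by simp
  have n0int: "int (n0 i) = n i" for i using n_nonneg[of i] by (simp add: n0_def)
  have r0int: "int (r0 i) = r i" for i using r_nonneg[of i] by (simp add: r0_def)
  have A0off: "int (A0 i j) = k i j" if "i \<noteq> j" for i j using that k_nonneg[OF that] by (simp add: A0_def)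
  have A0diag: "int (A0 i i) = n i + k i i" for i using n_ge[of i] by (simp add: A0_def)
  have cs: "n0 j = r0 j + (\<Sum>i\<in>UNIV. A0 i j)" for j
  proof -
    have "int (\<Sum>i\<in>UNIV. A0 i j) = int (A0 j j) + (\<Sum>i\<in>UNIV - {j}. int (A0 i j))"
      by (simp add: sum.remove[of UNIV j])
    also have "(\<Sum>i\<in>UNIV - {j}. int (A0 i j)) = (\<Sum>i\<in>UNIV - {j}. k i j)"
      by (intro sum.cong) (auto simp: A0off)
    finally have "int (\<Sum>i\<in>UNIV. A0 i j) = n j - r j"
      using A0diag[of j] k_diag[of j] by simp
    hence "int (n0 j) = int (r0 j) + int (\<Sum>i\<in>UNIV. A0 i j)" using n0int[of j] r0int[of j] by simp
    thus ?thesis by linarith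
  qed
  have step1: "prob_OA \<nu> (\<lambda>i. nat (r i)) n k = PP \<nu> r0 n0 A0"
  proof -
    have "Ev r0 n k = Ev r0 (\<lambda>j. int (n0 j)) (\<lambda>i j. int (A0 i j))"
      unfolding Ev_def by (auto simp: n0int A0off)
    thus ?thesis unfolding PP_def prob_OA_Q Q_def r0_def[abs_def] by simp
  qed
  have step2: "PP \<nu> r0 n0 A0 = G \<nu> n0 A0"
    using main[where \<nu>=\<nu> and s="sum n0 UNIV"] cs by blast
  have Vp_eq: "(\<Prod>i\<in>UNIV. pmf (conv_pow (\<nu> i) (nat (n i)))
            (\<lambda>j. if j = i then nat (n i + k i i) else nat (k i j))) = Vp \<nu> n0 A0"
    by (simp add: Vp_def pw_def n0_def A0_def)
  have nb_eq: "(\<Prod>i\<in>UNIV. real_of_int (max (n i) 1)) = (\<Prod>i\<in>UNIV. real (nb n0 i))"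
  proof (intro prod.cong refl)
    fix i
    have "max (n i) 1 = int (max (n0 i) 1)" using n0int[of i] by auto
    thus "real_of_int (max (n i) 1) = real (nb n0 i)" by (simp add: nb_def)
  qed
  show ?thesis
  proof (cases "Vp \<nu> n0 A0 = 0")
    case True
    thus ?thesis unfolding step1 step2 Vp_eq by (simp add: G_def)
  next
    case False
    have Ai0: "A0 i = 0" if "n i = 0" for i
    proof -
      have "pw (\<nu> i) (n0 i) (A0 i) \<noteq> 0"
        using False unfolding Vp_def by (metis prod_zero_at)
      moreover have "n0 i = 0" using that by (simp add: n0_def)
      ultimately show ?thesis by (simp add: pw0_eq split: if_splits)
    qed
    have Aj0: "A0 i j = 0" if "n j = 0" for i j
    proof -
      have "n0 j = 0" using that by (simp add: n0_def)
      hence "(\<Sum>i\<in>UNIV. A0 i j) = 0" using cs[of j] by simp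
      thus ?thesis by simp
    qed
    have mat: "(\<lambda>i j. if i \<in> {i. n i \<noteq> 0} \<and> j \<in> {i. n i \<noteq> 0} then - real_of_int (k i j) else dlt i j) = Lmat n0 A0"
    proof (intro ext)
      fix i j
      show "(if i \<in> {i. n i \<noteq> 0} \<and> j \<in> {i. n i \<noteq> 0} then - real_of_int (k i j) else dlt i j) = Lmat n0 A0 i j"
      proof (cases "n i = 0")
        case True
        thus ?thesis using Ai0[OF True] by (simp add: Lmat_def nb_def n0_def)
      next
        case ni: False
        have nbi: "nb n0 i = n0 i" using ni n_nonneg[of i] by (simp add: nb_def n0_def)
        show ?thesis
        proof (cases "n j = 0")
          case True
          hence "i \<noteq> j" using ni by auto
          thus ?thesis using True Aj0[OF True] by (simp add: Lmat_def dlt_def)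
        next
          case nj: False
          show ?thesis
          proof (cases "i = j")
            case True
            have "real (A0 i i) = real_of_int (n i + k i i)" using A0diag[of i] by (metis of_int_of_nat_eq)
            moreover have "real (n0 i) = real_of_int (n i)" using n0int[of i] by (metis of_int_of_nat_eq)
            ultimately show ?thesis using True ni nbi by (simp add: Lmat_def dlt_def)
          next
            case False
            have "real (A0 i j) = real_of_int (k i j)" using A0off[OF False] by (metis of_int_of_nat_eq)
            thus ?thesis using False ni nj by (simp add: Lmat_def dlt_def)
          qed
        qed
      qed
    qed
    have "det_on {i. n i \<noteq> 0} (\<lambda>i j. - real_of_int (k i j)) = det_on UNIV (Lmat n0 A0)"
      by (subst det_on_embed) (simp only: mat)
    thus ?thesis unfolding step1 step2 Vp_eq nb_eq G_def by simp
  qed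
qed

end
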